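(* Let $X$ be a real Banach space and $A$ a non-empty subset of $X$. Let $\mathsf P$ be any one of: remotal, uniquely remotal, strongly remotal, SUR, USUR, sup-compact. Then $B_X$ has property $\mathsf P$ on $A$ if and only if $S_X$ has property $\mathsf P$ on $A$.
   Context: $B_X,S_X$ are the closed unit ball and unit sphere. For non-empty bounded $F$, $x\in X$, $\delta\ge0$: $r(F,x)=\sup_{y\in F}\|x-y\|$, $Q_F(x,\delta)=\{y\in F:\|x-y\|\ge r(F,x)-\delta\}$, $Q_F(x)=Q_F(x,0)$. On a set $A$, $F$ is: remotal if $Q_F(x)\neq\emptyset$ for each $x\in A$; uniquely remotal if $Q_F(x)$ is a singleton for each $x\in A$; strongly remotal if for every $x\in A$ and $\epsilon>0$ there is $\delta>0$ with $Q_F(x,\delta)\subseteq Q_F(x)+\epsilon B_X$; SUR if uniquely remotal and strongly remotal; USUR if uniquely remotal and for every $\epsilon>0$ there is $\delta>0$ with $Q_F(x,\delta)\subseteq Q_F(x)+\epsilon B_X$ for all $x\in A$; sup-compact if for each $x\in A$ every sequence $(y_n)$ in $F$ with $\|x-y_n\|\to r(F,x)$ has a subsequence converging to an element of $F$. *)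

theory Defs
  imports "HOL-Analysis.Analysis"
begin

definition rad :: "'a::real_normed_vector set \<Rightarrow> 'a \<Rightarrow> real" where
  "rad F x = (SUP y\<in>F. norm (x - y))"

definition Qset :: "'a::real_normed_vector set \<Rightarrow> 'a \<Rightarrow> real \<Rightarrow> 'a set" where
  "Qset F x \<delta> = {y \<in> F. norm (x - y) \<ge> rad F x - \<delta>}"

definition plus_ball :: "'a::real_normed_vector set \<Rightarrow> real \<Rightarrow> 'a set" where
  "plus_ball S \<epsilon> = {q + b | q b. q \<in> S \<and> b \<in> cball 0 \<epsilon>}"

definition remotal_on :: "'a::real_normed_vector set \<Rightarrow> 'a set \<Rightarrow> bool" where
  "remotal_on F A \<longleftrightarrow> (\<forall>x\<in>A. Qset F x 0 \<noteq> {})"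

definition uniquely_remotal_on :: "'a::real_normed_vector set \<Rightarrow> 'a set \<Rightarrow> bool" where
  "uniquely_remotal_on F A \<longleftrightarrow> (\<forall>x\<in>A. \<exists>y. Qset F x 0 = {y})"

definition strongly_remotal_on :: "'a::real_normed_vector set \<Rightarrow> 'a set \<Rightarrow> bool" where
  "strongly_remotal_on F A \<longleftrightarrow>
     (\<forall>x\<in>A. \<forall>\<epsilon>>0. \<exists>\<delta>>0. Qset F x \<delta> \<subseteq> plus_ball (Qset F x 0) \<epsilon>)"

definition SUR_on :: "'a::real_normed_vector set \<Rightarrow> 'a set \<Rightarrow> bool" where
  "SUR_on F A \<longleftrightarrow> uniquely_remotal_on F A \<and> strongly_remotal_on F A"

definition USUR_on :: "'a::real_normed_vector set \<Rightarrow> 'a set \<Rightarrow> bool" where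
  "USUR_on F A \<longleftrightarrow> uniquely_remotal_on F A \<and>
     (\<forall>\<epsilon>>0. \<exists>\<delta>>0. \<forall>x\<in>A. Qset F x \<delta> \<subseteq> plus_ball (Qset F x 0) \<epsilon>)"

definition sup_compact_on :: "'a::real_normed_vector set \<Rightarrow> 'a set \<Rightarrow> bool" where
  "sup_compact_on F A \<longleftrightarrow>
     (\<forall>x\<in>A. \<forall>y::nat \<Rightarrow> 'a. (\<forall>n. y n \<in> F) \<and> ((\<lambda>n. norm (x - y n)) \<longlonglongrightarrow> rad F x)
        \<longrightarrow> (\<exists>s l. strict_mono s \<and> l \<in> F \<and> (y \<circ> s) \<longlonglongrightarrow> l))"

end

theory Submission
  imports Defs
begin

lemma far_point:
  fixes x :: "'a::real_normed_vector"
  assumes "\<exists>z::'a. z \<noteq> 0"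
  shows "\<exists>u. norm u = 1 \<and> norm (x - u) = norm x + 1"
proof (cases "x = 0")
  case True
  obtain z :: 'a where "z \<noteq> 0" using assms by blast
  then show ?thesis using True by (intro exI[of _ "z /\<^sub>R norm z"]) auto
next
  case False
  have "x - (- (x /\<^sub>R norm x)) = (1 + 1 / norm x) *\<^sub>R x"
    by (simp add: scaleR_add_left scaleR_diff_left inverse_eq_divide)
  hence "norm (x - (- (x /\<^sub>R norm x))) = (1 + 1 / norm x) * norm x"
    by (simp add: add_pos_nonneg)
  also have "\<dots> = norm x + 1" using False by (simp add: field_simps)
  finally show ?thesis using False by (intro exI[of _ "- (x /\<^sub>R norm x)"]) auto
qed

lemma rad_cball:
  fixes x :: "'a::real_normed_vector"
  assumes "\<exists>z::'a. z \<noteq> 0"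
  shows "rad (cball 0 1) x = norm x + 1"
proof -
  obtain u where u: "norm u = 1" "norm (x - u) = norm x + 1" using far_point[OF assms] by blast
  show ?thesis unfolding rad_def
  proof (rule cSup_eq_maximum)
    show "norm x + 1 \<in> (\<lambda>y. norm (x - y)) ` cball 0 1" using u by (auto intro: image_eqI[of _ _ u])
    fix t assume "t \<in> (\<lambda>y. norm (x - y)) ` cball 0 1"
    then obtain y where "norm y \<le> 1" "t = norm (x - y)" by auto
    then show "t \<le> norm x + 1" using norm_triangle_ineq4[of x y] by linarith
  qed
qed

lemma rad_sphere:
  fixes x :: "'a::real_normed_vector"
  assumes "\<exists>z::'a. z \<noteq> 0"
  shows "rad (sphere 0 1) x = norm x + 1"
proof -
  obtain u where u: "norm u = 1" "norm (x - u) = norm x + 1" using far_point[OF assms] by blast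
  show ?thesis unfolding rad_def
  proof (rule cSup_eq_maximum)
    show "norm x + 1 \<in> (\<lambda>y. norm (x - y)) ` sphere 0 1" using u by (auto intro: image_eqI[of _ _ u])
    fix t assume "t \<in> (\<lambda>y. norm (x - y)) ` sphere 0 1"
    then obtain y where "norm y = 1" "t = norm (x - y)" by auto
    then show "t \<le> norm x + 1" using norm_triangle_ineq4[of x y] by linarith
  qed
qed

lemma Q0_eq:
  fixes x :: "'a::real_normed_vector"
  assumes "\<exists>z::'a. z \<noteq> 0"
  shows "Qset (cball 0 1) x 0 = Qset (sphere 0 1) x 0"
  unfolding Qset_def rad_cball[OF assms] rad_sphere[OF assms]
proof (auto)
  fix y :: 'a assume "norm y \<le> 1" "norm x + 1 \<le> norm (x - y)"
  then show "norm y = 1" using norm_triangle_ineq4[of x y] by linarith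
qed

lemma Qsub:
  fixes x :: "'a::real_normed_vector"
  assumes "\<exists>z::'a. z \<noteq> 0"
  shows "Qset (sphere 0 1) x d \<subseteq> Qset (cball 0 1) x d"
  unfolding Qset_def rad_cball[OF assms] rad_sphere[OF assms] by auto

lemma QB_normalize:
  fixes x :: "'a::real_normed_vector"
  assumes "\<exists>z::'a. z \<noteq> 0" and "d < 1" and y: "y \<in> Qset (cball 0 1) x d"
  shows "y /\<^sub>R norm y \<in> Qset (sphere 0 1) x (2*d) \<and> norm (y - y /\<^sub>R norm y) \<le> d"
proof -
  have y1: "norm y \<le> 1" and y2: "norm (x - y) \<ge> norm x + 1 - d"
    using y unfolding Qset_def rad_cball[OF assms(1)] by auto
  have "norm y \<ge> 1 - d" using y2 norm_triangle_ineq4[of x y] by linarith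
  hence ny: "norm y > 0" using assms(2) by linarith
  have "y - y /\<^sub>R norm y = (1 - 1 / norm y) *\<^sub>R y" by (simp add: scaleR_add_left scaleR_diff_left inverse_eq_divide)
  hence "norm (y - y /\<^sub>R norm y) = \<bar>1 - 1 / norm y\<bar> * norm y" by simp
  also have "\<dots> = \<bar>norm y - 1\<bar>"
  proof -
    have "(1 - 1/norm y) * norm y = norm y - 1" using ny by (simp add: field_simps)
    then show ?thesis using ny by (metis abs_mult abs_of_pos)
  qed
  also have "\<dots> = 1 - norm y" using y1 by simp
  finally have dn: "norm (y - y /\<^sub>R norm y) \<le> d" using \<open>norm y \<ge> 1 - d\<close> by linarith
  have "norm (x - y /\<^sub>R norm y) \<ge> norm (x - y) - norm (y - y /\<^sub>R norm y)"
  proof -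
    have e: "x - y = (x - y /\<^sub>R norm y) + (y /\<^sub>R norm y - y)" by simp
    have "norm (x - y) \<le> norm (x - y /\<^sub>R norm y) + norm (y /\<^sub>R norm y - y)"
      by (subst e, rule norm_triangle_ineq)
    then show ?thesis by (simp add: norm_minus_commute)
  qed
  hence "norm (x - y /\<^sub>R norm y) \<ge> norm x + 1 - 2*d" using dn y2 by linarith
  moreover have "norm (y /\<^sub>R norm y) = 1" using ny by simp
  ultimately show ?thesis using dn unfolding Qset_def rad_sphere[OF assms(1)] by auto
qed

lemma pb_shift:
  fixes y :: "'a::real_normed_vector"
  assumes "y' \<in> plus_ball Q e1" "norm (y - y') \<le> e2"
  shows "y \<in> plus_ball Q (e1 + e2)"
proof -
  obtain q b where qb: "q \<in> Q" "b \<in> cball 0 e1" "y' = q + b" using assms(1) unfolding plus_ball_def by auto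
  have "norm (b + (y - y')) \<le> e1 + e2"
    using qb(2) assms(2) norm_triangle_ineq[of b "y - y'"] by auto
  moreover have "y = q + (b + (y - y'))" using qb(3) by simp
  ultimately show ?thesis unfolding plus_ball_def using qb(1) by fastforce
qed

lemma SR_forward:
  fixes x :: "'a::real_normed_vector"
  assumes nt: "\<exists>z::'a. z \<noteq> 0" and e: "e > 0" and d': "d' > 0"
    and H: "Qset (sphere 0 1) x d' \<subseteq> plus_ball (Qset (sphere 0 1) x 0) (e/2)"
  shows "Qset (cball 0 1) x (min (d'/2) (min (e/2) (1/2))) \<subseteq> plus_ball (Qset (cball 0 1) x 0) e"
proof
  let ?d = "min (d'/2) (min (e/2) (1/2))"
  fix y assume y: "y \<in> Qset (cball 0 1) x ?d"
  have "?d < 1" by simp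
  from QB_normalize[OF nt this y] have
    a: "y /\<^sub>R norm y \<in> Qset (sphere 0 1) x (2 * ?d)" and b: "norm (y - y /\<^sub>R norm y) \<le> ?d" by auto
  have "Qset (sphere 0 1) x (2 * ?d) \<subseteq> Qset (sphere 0 1) x d'"
    unfolding Qset_def by auto
  with a H have "y /\<^sub>R norm y \<in> plus_ball (Qset (cball 0 1) x 0) (e/2)"
    using Q0_eq[OF nt] by auto
  from pb_shift[OF this, of y "e/2"] b show "y \<in> plus_ball (Qset (cball 0 1) x 0) e" by simp
qed

lemma SR_back:
  fixes x :: "'a::real_normed_vector"
  assumes nt: "\<exists>z::'a. z \<noteq> 0"
    and H: "Qset (cball 0 1) x d \<subseteq> plus_ball (Qset (cball 0 1) x 0) e"
  shows "Qset (sphere 0 1) x d \<subseteq> plus_ball (Qset (sphere 0 1) x 0) e"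
  using H Qsub[OF nt, of x d] Q0_eq[OF nt, of x] by auto

lemma SC_forward:
  fixes x :: "'a::real_normed_vector"
  assumes nt: "\<exists>z::'a. z \<noteq> 0"
    and H: "\<forall>y::nat \<Rightarrow> 'a. (\<forall>n. y n \<in> sphere 0 1) \<and> ((\<lambda>n. norm (x - y n)) \<longlonglongrightarrow> rad (sphere 0 1) x)
        \<longrightarrow> (\<exists>s l. strict_mono s \<and> l \<in> sphere 0 1 \<and> (y \<circ> s) \<longlonglongrightarrow> l)"
    and yB: "\<forall>n. y n \<in> cball 0 1" and yl: "(\<lambda>n. norm (x - y n)) \<longlonglongrightarrow> rad (cball 0 1) x"
  shows "\<exists>s l. strict_mono s \<and> l \<in> cball 0 1 \<and> (y \<circ> s) \<longlonglongrightarrow> l"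
proof -
  obtain u :: 'a where u: "norm u = 1" using far_point[OF nt, of 0] by auto
  define z where "z n = (if y n = 0 then u else y n /\<^sub>R norm (y n))" for n
  have zS: "z n \<in> sphere 0 1" for n using u unfolding z_def by auto
  have yl': "(\<lambda>n. norm (x - y n)) \<longlonglongrightarrow> norm x + 1" using yl rad_cball[OF nt] by simp
  have zy: "norm (z n - y n) \<le> 1 - norm (y n)" for n
  proof (cases "y n = 0")
    case True then show ?thesis using u unfolding z_def by simp
  next
    case False
    hence ny: "norm (y n) > 0" by simp
    have "y n /\<^sub>R norm (y n) - y n = (1 / norm (y n) - 1) *\<^sub>R y n"
      by (simp add: scaleR_diff_left inverse_eq_divide)
    hence "norm (z n - y n) = \<bar>1 / norm (y n) - 1\<bar> * norm (y n)" using False unfolding z_def by simp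
    also have "\<dots> = \<bar>1 - norm (y n)\<bar>"
    proof -
      have "(1 / norm (y n) - 1) * norm (y n) = 1 - norm (y n)" using ny by (simp add: field_simps)
      then show ?thesis using ny by (metis abs_mult abs_of_pos)
    qed
    also have "\<dots> = 1 - norm (y n)" using yB by simp
    finally show ?thesis by simp
  qed
  have t0: "(\<lambda>n. 1 - norm (y n)) \<longlonglongrightarrow> 0"
  proof (rule tendsto_sandwich[of "\<lambda>n. 0" _ _ "\<lambda>n. norm x + 1 - norm (x - y n)"])
    show "\<forall>\<^sub>F n in sequentially. 0 \<le> 1 - norm (y n)" using yB by simp
    show "\<forall>\<^sub>F n in sequentially. 1 - norm (y n) \<le> norm x + 1 - norm (x - y n)"
      using norm_triangle_ineq4 by (auto intro!: always_eventually simp: algebra_simps)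
    show "(\<lambda>n. 0::real) \<longlonglongrightarrow> 0" by simp
    have "(\<lambda>n. norm x + 1 - norm (x - y n)) \<longlonglongrightarrow> norm x + 1 - (norm x + 1)"
      by (intro tendsto_intros yl')
    then show "(\<lambda>n. norm x + 1 - norm (x - y n)) \<longlonglongrightarrow> 0" by simp
  qed
  have zy0: "(\<lambda>n. z n - y n) \<longlonglongrightarrow> 0"
    by (rule Lim_null_comparison[OF always_eventually t0]) (use zy in auto)
  hence nzy0: "(\<lambda>n. norm (z n - y n)) \<longlonglongrightarrow> 0" using tendsto_norm_zero by blast
  have zl: "(\<lambda>n. norm (x - z n)) \<longlonglongrightarrow> rad (sphere 0 1) x"
    unfolding rad_sphere[OF nt]
  proof (rule tendsto_sandwich[of "\<lambda>n. norm (x - y n) - norm (z n - y n)" _ _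
        "\<lambda>n. norm (x - y n) + norm (z n - y n)"])
    have tri: "\<bar>norm (x - z n) - norm (x - y n)\<bar> \<le> norm (z n - y n)" for n
    proof -
      have "\<bar>norm (x - z n) - norm (x - y n)\<bar> \<le> norm ((x - z n) - (x - y n))"
        by (rule norm_triangle_ineq3)
      also have "\<dots> = norm (z n - y n)" by (simp add: norm_minus_commute)
      finally show ?thesis .
    qed
    show "\<forall>\<^sub>F n in sequentially. norm (x - y n) - norm (z n - y n) \<le> norm (x - z n)"
      by (intro always_eventually allI, rename_tac n, insert tri, simp only: abs_le_iff, smt (verit))
    show "\<forall>\<^sub>F n in sequentially. norm (x - z n) \<le> norm (x - y n) + norm (z n - y n)"
      by (intro always_eventually allI, rename_tac n, insert tri, simp only: abs_le_iff, smt (verit))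
    show "(\<lambda>n. norm (x - y n) - norm (z n - y n)) \<longlonglongrightarrow> norm x + 1"
      using tendsto_diff[OF yl' nzy0] by simp
    show "(\<lambda>n. norm (x - y n) + norm (z n - y n)) \<longlonglongrightarrow> norm x + 1"
      using tendsto_add[OF yl' nzy0] by simp
  qed
  from H zS zl obtain s l where s: "strict_mono s" "l \<in> sphere 0 1" "(z \<circ> s) \<longlonglongrightarrow> l" by blast
  have "((\<lambda>n. z n - y n) \<circ> s) \<longlonglongrightarrow> 0" using LIMSEQ_subseq_LIMSEQ[OF zy0 s(1)] .
  hence "(\<lambda>n. (z \<circ> s) n - ((\<lambda>n. z n - y n) \<circ> s) n) \<longlonglongrightarrow> l - 0"
    by (intro tendsto_diff s(3))
  hence "(y \<circ> s) \<longlonglongrightarrow> l" by (simp add: o_def)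
  moreover have "l \<in> cball 0 1" using s(2) by simp
  ultimately show ?thesis using s(1) by blast
qed

lemma SC_back:
  fixes x :: "'a::real_normed_vector"
  assumes nt: "\<exists>z::'a. z \<noteq> 0"
    and H: "\<forall>y::nat \<Rightarrow> 'a. (\<forall>n. y n \<in> cball 0 1) \<and> ((\<lambda>n. norm (x - y n)) \<longlonglongrightarrow> rad (cball 0 1) x)
        \<longrightarrow> (\<exists>s l. strict_mono s \<and> l \<in> cball 0 1 \<and> (y \<circ> s) \<longlonglongrightarrow> l)"
    and yS: "\<forall>n. y n \<in> sphere 0 1" and yl: "(\<lambda>n. norm (x - y n)) \<longlonglongrightarrow> rad (sphere 0 1) x"
  shows "\<exists>s l. strict_mono s \<and> l \<in> sphere 0 1 \<and> (y \<circ> s) \<longlonglongrightarrow> l"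
proof -
  have "(\<lambda>n. norm (x - y n)) \<longlonglongrightarrow> rad (cball 0 1) x" using yl rad_cball[OF nt] rad_sphere[OF nt] by simp
  moreover have "\<forall>n. y n \<in> cball 0 1" using yS by auto
  ultimately obtain s l where s: "strict_mono s" "l \<in> cball 0 1" "(y \<circ> s) \<longlonglongrightarrow> l" using H by blast
  have "(\<lambda>n. norm ((y \<circ> s) n)) \<longlonglongrightarrow> norm l" by (intro tendsto_norm s(3))
  moreover have "(\<lambda>n. norm ((y \<circ> s) n)) = (\<lambda>n. 1)" using yS by auto
  ultimately have "norm l = 1" using LIMSEQ_unique[OF tendsto_const] by metis
  then show ?thesis using s by auto
qed

theorem proposition2p15:
  fixes A :: "'a::banach set"
  assumes nontriv: "\<exists>z::'a. z \<noteq> 0"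
    and "A \<noteq> {}"
  shows "(remotal_on (cball 0 1) A \<longleftrightarrow> remotal_on (sphere 0 1) A)
       \<and> (uniquely_remotal_on (cball 0 1) A \<longleftrightarrow> uniquely_remotal_on (sphere 0 1) A)
       \<and> (strongly_remotal_on (cball 0 1) A \<longleftrightarrow> strongly_remotal_on (sphere 0 1) A)
       \<and> (SUR_on (cball 0 1) A \<longleftrightarrow> SUR_on (sphere 0 1) A)
       \<and> (USUR_on (cball 0 1) A \<longleftrightarrow> USUR_on (sphere 0 1) A)
       \<and> (sup_compact_on (cball 0 1) A \<longleftrightarrow> sup_compact_on (sphere 0 1) A)"
proof -
  note Q0 = Q0_eq[OF nontriv]
  have R: "remotal_on (cball 0 1) A \<longleftrightarrow> remotal_on (sphere 0 1) A"
    unfolding remotal_on_def Q0 ..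
  have U: "uniquely_remotal_on (cball 0 1) A \<longleftrightarrow> uniquely_remotal_on (sphere 0 1) A"
    unfolding uniquely_remotal_on_def Q0 ..
  have S: "strongly_remotal_on (cball 0 1) A \<longleftrightarrow> strongly_remotal_on (sphere 0 1) A"
  proof
    assume H: "strongly_remotal_on (cball 0 1) A"
    show "strongly_remotal_on (sphere 0 1) A" unfolding strongly_remotal_on_def
    proof (intro ballI allI impI)
      fix x e assume "x \<in> A" "(e::real) > 0"
      then obtain d where "d > 0" "Qset (cball 0 1) x d \<subseteq> plus_ball (Qset (cball 0 1) x 0) e"
        using H unfolding strongly_remotal_on_def by blast
      then show "\<exists>d>0. Qset (sphere 0 1) x d \<subseteq> plus_ball (Qset (sphere 0 1) x 0) e"
        using SR_back[OF nontriv] by blast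
    qed
  next
    assume H: "strongly_remotal_on (sphere 0 1) A"
    show "strongly_remotal_on (cball 0 1) A" unfolding strongly_remotal_on_def
    proof (intro ballI allI impI)
      fix x e assume "x \<in> A" "(e::real) > 0"
      then obtain d where d: "d > 0" "Qset (sphere 0 1) x d \<subseteq> plus_ball (Qset (sphere 0 1) x 0) (e/2)"
        using H unfolding strongly_remotal_on_def by (meson half_gt_zero)
      have "min (d/2) (min (e/2) (1/2)) > 0" using d(1) \<open>e > 0\<close> by simp
      then show "\<exists>d>0. Qset (cball 0 1) x d \<subseteq> plus_ball (Qset (cball 0 1) x 0) e"
        using SR_forward[OF nontriv \<open>e > 0\<close> d] by blast
    qed
  qed
  have US: "USUR_on (cball 0 1) A \<longleftrightarrow> USUR_on (sphere 0 1) A"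
    unfolding USUR_on_def U
  proof (intro conj_cong refl iffI allI impI)
    fix e :: real assume "e > 0" and H: "\<forall>e>0. \<exists>d>0. \<forall>x\<in>A. Qset (cball 0 1) x d \<subseteq> plus_ball (Qset (cball 0 1) x 0) e"
    then obtain d where "d > 0" "\<forall>x\<in>A. Qset (cball 0 1) x d \<subseteq> plus_ball (Qset (cball 0 1) x 0) e" by blast
    then show "\<exists>d>0. \<forall>x\<in>A. Qset (sphere 0 1) x d \<subseteq> plus_ball (Qset (sphere 0 1) x 0) e"
      using SR_back[OF nontriv] by blast
  next
    fix e :: real assume "e > 0" and H: "\<forall>e>0. \<exists>d>0. \<forall>x\<in>A. Qset (sphere 0 1) x d \<subseteq> plus_ball (Qset (sphere 0 1) x 0) e"
    then obtain d where d: "d > 0" "\<forall>x\<in>A. Qset (sphere 0 1) x d \<subseteq> plus_ball (Qset (sphere 0 1) x 0) (e/2)"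
      by (meson half_gt_zero)
    have "min (d/2) (min (e/2) (1/2)) > 0" using d(1) \<open>e > 0\<close> by simp
    then show "\<exists>d>0. \<forall>x\<in>A. Qset (cball 0 1) x d \<subseteq> plus_ball (Qset (cball 0 1) x 0) e"
      using SR_forward[OF nontriv \<open>e > 0\<close> d(1)] d(2) by blast
  qed
  have SC: "sup_compact_on (cball 0 1) A \<longleftrightarrow> sup_compact_on (sphere 0 1) A"
  proof
    assume H: "sup_compact_on (cball 0 1) A"
    show "sup_compact_on (sphere 0 1) A" unfolding sup_compact_on_def
    proof (intro ballI allI impI)
      fix x and y :: "nat \<Rightarrow> 'a" assume "x \<in> A"
        "(\<forall>n. y n \<in> sphere 0 1) \<and> (\<lambda>n. norm (x - y n)) \<longlonglongrightarrow> rad (sphere 0 1) x"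
      then show "\<exists>s l. strict_mono s \<and> l \<in> sphere 0 1 \<and> (y \<circ> s) \<longlonglongrightarrow> l"
        using SC_back[OF nontriv] H unfolding sup_compact_on_def by blast
    qed
  next
    assume H: "sup_compact_on (sphere 0 1) A"
    show "sup_compact_on (cball 0 1) A" unfolding sup_compact_on_def
    proof (intro ballI allI impI)
      fix x and y :: "nat \<Rightarrow> 'a" assume "x \<in> A"
        "(\<forall>n. y n \<in> cball 0 1) \<and> (\<lambda>n. norm (x - y n)) \<longlonglongrightarrow> rad (cball 0 1) x"
      then show "\<exists>s l. strict_mono s \<and> l \<in> cball 0 1 \<and> (y \<circ> s) \<longlonglongrightarrow> l"
        using SC_forward[OF nontriv] H unfolding sup_compact_on_def by blast
    qed
  qed
  show ?thesis using R U S US SC unfolding SUR_on_def by blast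
qed

end
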